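(* Let $P$ be an $n\times n$ integer matrix which is anticommutative, i.e. $P^{T}\,\overline I\,P\cong\overline I$, where $\overline I=J-I$ and $J$ is the all-ones $n\times n$ matrix. Let $m$ be the number of columns of $P$ with odd entry sum and $k=n-m$ (equivalently, after a simultaneous permutation of rows and columns, $P^TP\cong\begin{bmatrix} I_m & J\\ J & \overline I_k\end{bmatrix}$). Then, unless $m$ is even and $k$ is odd, $P$ is dyadically invertible.
   Context: For integer matrices, $A\cong B$ means $A\equiv B\pmod 2$ entrywise. A square integer matrix $P$ is dyadically invertible if there is an integer matrix $A$ with $AP\cong I$. $J$ denotes a block of all ones of the appropriate size and $\overline I_k=J_{k\times k}-I_k$. *)

theory Defs
  imports "HOL-Analysis.Analysis"
begin

definition cong2 :: "int ^'n ^'m \<Rightarrow> int ^'n ^'m \<Rightarrow> bool" where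
  "cong2 A B \<longleftrightarrow> (\<forall>i j. A $ i $ j mod 2 = B $ i $ j mod 2)"

definition Ibar :: "int ^'n ^'n" where
  "Ibar = (\<chi> i j. if i = j then 0 else 1)"

definition dyadically_invertible :: "int ^'n ^'n \<Rightarrow> bool" where
  "dyadically_invertible P \<longleftrightarrow> (\<exists>A :: int ^'n ^'n. cong2 (A ** P) (mat 1))"

definition odd_cols :: "int ^'n ^'n \<Rightarrow> nat" where
  "odd_cols P = card {j. odd (\<Sum>i\<in>UNIV. P $ i $ j)}"

end

theory Submission
  imports Defs "HOL-Library.Z2"
begin

definition mb :: "int ^'n ^'m \<Rightarrow> bit ^'n ^'m" where
  "mb A = (\<chi> i j. of_int (A $ i $ j))"

lemma of_int_bit_mod: "(of_int z :: bit) = of_int (z mod 2)"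
proof -
  have "(of_int z :: bit) = of_int (2 * (z div 2) + z mod 2)" by (simp only: mult_div_mod_eq)
  also have "\<dots> = 2 * of_int (z div 2) + of_int (z mod 2)" by (simp only: of_int_add of_int_mult of_int_numeral)
  also have "\<dots> = of_int (z mod 2)" by (simp only: bit_2_eq_0 mult_zero_left add_0_left)
  finally show ?thesis .
qed
lemma of_nat_bit_mod: "(of_nat z :: bit) = of_nat (z mod 2)"
proof -
  have "(of_nat z :: bit) = of_nat (2 * (z div 2) + z mod 2)" by (simp only: mult_div_mod_eq)
  also have "\<dots> = 2 * of_nat (z div 2) + of_nat (z mod 2)" by (simp only: of_nat_add of_nat_mult of_nat_numeral)
  also have "\<dots> = of_nat (z mod 2)" by (simp only: bit_2_eq_0 mult_zero_left add_0_left)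
  finally show ?thesis .
qed
lemma of_int_bit_if: "(of_int z :: bit) = (if odd z then 1 else 0)"
proof (cases "odd z")
  case True
  then have "z mod 2 = 1" by (simp only: odd_iff_mod_2_eq_one)
  then show ?thesis using True by (subst of_int_bit_mod) (simp only: of_int_1 if_True not_False_eq_True)
next
  case False
  then have "z mod 2 = 0" by (simp only: even_iff_mod_2_eq_zero not_not)
  then show ?thesis using False by (subst of_int_bit_mod) (simp only: of_int_0 if_False)
qed
lemma of_nat_bit_if: "(of_nat z :: bit) = (if odd z then 1 else 0)"
proof (cases "odd z")
  case True
  then have "z mod 2 = 1" by (simp only: odd_iff_mod_2_eq_one)
  then show ?thesis using True by (subst of_nat_bit_mod) (simp only: of_nat_1 if_True not_False_eq_True)
next
  case False
  then have "z mod 2 = 0" by (simp only: even_iff_mod_2_eq_zero not_not)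
  then show ?thesis using False by (subst of_nat_bit_mod) (simp only: of_nat_0 if_False)
qed
lemma of_int_bit_0: "((of_int z :: bit) = 0) \<longleftrightarrow> even z"
  unfolding of_int_bit_if by (cases "odd z") simp_all
lemma of_nat_bit_1: "((of_nat z :: bit) = 1) \<longleftrightarrow> odd z"
  unfolding of_nat_bit_if by (cases "odd z") simp_all
lemma of_int_of_bit: "(of_int (of_bool (odd b)) :: bit) = b" by (cases b) simp_all

lemma of_int_bit_eq: "((of_int x :: bit) = of_int y) \<longleftrightarrow> x mod 2 = y mod 2"
proof -
  have "((of_int x :: bit) = of_int y) \<longleftrightarrow> (of_int (x - y) :: bit) = 0"
    by (subst of_int_diff) (rule eq_iff_diff_eq_0)
  also have "\<dots> \<longleftrightarrow> even (x - y)" by (rule of_int_bit_0)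
  also have "\<dots> \<longleftrightarrow> x mod 2 = y mod 2" by (simp only: mod_eq_dvd_iff)
  finally show ?thesis .
qed

lemma cong2_mb: "cong2 A B \<longleftrightarrow> mb A = mb B"
  unfolding cong2_def mb_def by (simp add: vec_eq_iff of_int_bit_eq)

lemma mb_mult: "mb (A ** B) = mb A ** mb B"
  unfolding mb_def by (simp add: vec_eq_iff matrix_matrix_mult_def)

lemma mb_transpose: "mb (transpose A) = transpose (mb A)"
  unfolding mb_def by (simp add: vec_eq_iff transpose_def)

lemma mb_mat1: "mb (mat 1) = mat 1"
  unfolding mb_def by (simp add: vec_eq_iff mat_def)

lemma sum_if_card: "finite A \<Longrightarrow> (\<Sum>j\<in>A. if Q j then 1 else 0 :: 'a::comm_semiring_1) = of_nat (card {j\<in>A. Q j})"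
  by (simp add: sum.If_cases Int_def)

lemma sum_if_card_UNIV: "(\<Sum>j\<in>(UNIV::'b::finite set). if Q j then 1 else 0 :: 'a::comm_semiring_1) = of_nat (card {j. Q j})"
  using sum_if_card[of "UNIV::'b set" Q] by simp

lemma ifmul: "(if c then 0 else 1) * (a::'a::ring_1) = a - (if c then a else 0)"
  by (cases c) (simp only: if_True if_False mult_zero_left mult_1_left diff_self diff_zero)+

theorem proposition3p6:
  fixes P :: "int ^'n ^'n"
  assumes anticomm: "cong2 (transpose P ** Ibar ** P) Ibar"
  shows "\<not> (even (odd_cols P) \<and> odd (CARD('n) - odd_cols P)) \<longrightarrow> dyadically_invertible P"
proof
  assume H: "\<not> (even (odd_cols P) \<and> odd (CARD('n) - odd_cols P))"
  define Q where "Q = mb P"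
  define Ib where "Ib = (mb Ibar :: bit^'n^'n)"
  have QI: "transpose Q ** Ib ** Q = Ib"
    using anticomm unfolding cong2_mb mb_mult mb_transpose Q_def Ib_def .
  have Ib: "Ib $ i $ j = (if i = j then 0 else 1)" for i j
    unfolding Ib_def mb_def Ibar_def by simp
  show "dyadically_invertible P"
  proof (cases "inj ((*v) Q)")
    case True
    have "det (matrix ((*v) Q)) \<noteq> 0"
      using det_nz_iff_inj_gen[OF matrix_vector_mul_linear_gen, of Q] True by blast
    then have "det Q \<noteq> 0" by (metis matrix_of_matrix_vector_mul)
    then have "invertible Q" by (metis invertible_det_nz)
    then have "\<exists>B::bit^'n^'n. B ** Q = mat 1" unfolding invertible_left_inverse .
    then obtain B where B: "B ** Q = mat 1" by (rule exE)
    define A :: "int^'n^'n" where "A = (\<chi> i j. of_bool (odd (B $ i $ j)))"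
    have mA: "mb A = B" unfolding A_def mb_def vec_lambda_beta of_int_of_bit vec_lambda_eta ..
    have "mb (A ** P) = mb (mat 1)"
      by (simp only: mb_mult mb_mat1 mA Q_def[symmetric] B)
    then have "cong2 (A ** P) (mat 1)" by (simp only: cong2_mb)
    then show ?thesis unfolding dyadically_invertible_def by blast
  next
    case False
    then obtain y z where yz: "Q *v y = Q *v z" "y \<noteq> z" unfolding inj_def by blast
    define x where "x = y - z"
    have x0: "x \<noteq> 0" using yz(2) unfolding x_def by (simp only: right_minus_eq not_False_eq_True)
    have Qx: "Q *v x = 0" unfolding x_def
      by (simp only: matrix_vector_mult_diff_distrib yz(1) diff_self)
    have "Ib *v x = (transpose Q ** Ib ** Q) *v x" by (simp only: QI)
    also have "\<dots> = (transpose Q ** Ib) *v (Q *v x)" by (simp only: matrix_vector_mul_assoc)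
    also have "\<dots> = 0" by (simp only: Qx matrix_vector_mult_0_right)
    finally have Ibx: "Ib *v x = 0" .
    define s where "s = (\<Sum>j\<in>UNIV. x $ j)"
    have xs: "x $ i = s" for i
    proof -
      have "0 = (Ib *v x) $ i" by (simp only: Ibx zero_index)
      also have "\<dots> = (\<Sum>j\<in>UNIV. (if i = j then 0 else 1) * x $ j)"
        by (simp only: matrix_vector_mult_def vec_lambda_beta Ib)
      also have "\<dots> = (\<Sum>j\<in>UNIV. x $ j - (if i = j then x $ j else 0))"
      proof (rule sum.cong)
        fix j assume "j \<in> (UNIV::'n set)"
        show "(if i = j then 0 else 1) * x $ j = x $ j - (if i = j then x $ j else 0)"
          by (rule ifmul)
      qed (rule refl)
      also have "\<dots> = s - (\<Sum>j\<in>UNIV. if i = j then x $ j else 0)"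
        unfolding s_def by (rule sum_subtractf)
      also have "\<dots> = s - x $ i" by (subst sum.delta'[OF finite]) (simp only: UNIV_I if_True)
      finally have "s - x $ i = 0" by (rule sym)
      then show ?thesis unfolding right_minus_eq by (rule sym)
    qed
    have s1: "s = 1"
    proof (rule ccontr)
      assume "s \<noteq> 1"
      then have s0: "s = 0" using bit_not_one_iff by blast
      have "x = 0" unfolding vec_eq_iff by (simp only: xs s0 zero_index simp_thms)
      then show False using x0 by blast
    qed
    have "s = of_nat CARD('n)"
      using s_def by (simp only: xs s1 sum_constant mult_1_right)
    then have oddn: "odd CARD('n)" using s1 of_nat_bit_1 by metis
    have rows: "(\<Sum>j\<in>UNIV. (of_int (P $ i $ j) :: bit)) = 0" for i
    proof -
      have "0 = (Q *v x) $ i" by (simp only: Qx zero_index)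
      also have "\<dots> = (\<Sum>j\<in>UNIV. (of_int (P $ i $ j) :: bit))"
        by (simp only: matrix_vector_mult_def vec_lambda_beta xs s1 mult_1_right Q_def mb_def)
      finally show ?thesis by (rule sym)
    qed
    have "(0::bit) = (\<Sum>i\<in>UNIV. \<Sum>j\<in>UNIV. (of_int (P $ i $ j) :: bit))"
      by (simp only: rows sum.neutral_const)
    also have "\<dots> = (\<Sum>j\<in>UNIV. \<Sum>i\<in>UNIV. (of_int (P $ i $ j) :: bit))"
      by (rule sum.swap)
    also have "\<dots> = (\<Sum>j\<in>UNIV. (if odd (\<Sum>i\<in>UNIV. P $ i $ j) then 1 else 0))"
    proof (rule sum.cong)
      fix j :: 'n
      have "(\<Sum>i\<in>UNIV. (of_int (P $ i $ j) :: bit)) = of_int (\<Sum>i\<in>UNIV. P $ i $ j)" by (simp only: of_int_sum)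
      also have "\<dots> = (if odd (\<Sum>i\<in>UNIV. P $ i $ j) then 1 else 0)"
        by (rule of_int_bit_if)
      finally show "(\<Sum>i\<in>UNIV. (of_int (P $ i $ j) :: bit)) = (if odd (\<Sum>i\<in>UNIV. P $ i $ j) then 1 else 0)" .
    qed (rule refl)
    also have "\<dots> = of_nat (odd_cols P)"
      unfolding odd_cols_def by (rule sum_if_card_UNIV)
    finally have "0 = (of_nat (odd_cols P) :: bit)" .
    then have evm: "even (odd_cols P)" using of_nat_bit_1 by (metis zero_neq_one)
    have "odd_cols P \<le> CARD('n)" unfolding odd_cols_def by (rule card_mono) auto
    then have "odd (CARD('n) - odd_cols P)" using evm oddn by presburger
    then show ?thesis using H evm by blast
  qed
qed

end
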